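(* Let $n\ge 1$ and $k\ge 1$ be integers and set $m=n+2k$. Let $L=\{x_1,\dots,x_n\}$ and $L'=\{y_1,\dots,y_m\}$ be finite sets of cells, and let there be $2k+1$ actions $u_1,\dots,u_{2k+1}$ such that applying action $u_j$ at cell $x_i$ leads to cell $y_{i+j-1}$. Define action probabilities $$p(x_i,u_1)=\frac{n-i+1}{m},\qquad p(x_i,u_j)=\frac{1}{m}\ (2\le j\le 2k),\qquad p(x_i,u_{2k+1})=\frac{i}{m}.$$ Then (1) $\sum_{j=1}^{2k+1} p(x_i,u_j)=1$ for every $i\in\{1,\dots,n\}$, and (2) if the distribution on $L$ is uniform, $p(x_i)=1/n$ for all $i$, then the induced distribution on $L'$, given by $p(y_l)=\sum_{i=1}^n\sum_{j:\, i+j-1=l} p(x_i,u_j)\,p(x_i)$, satisfies $p(y_l)=1/m$ for every $l\in\{1,\dots,m\}$.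
   Context: This models the one-dimensional system $x_{t+1}=x_t+u$ with $u\in[-1,1]$, where two consecutive reachable level sets $L$ (at time $t$) and $L'$ (at time $t+1$) are discretized into consecutive cells of equal length, $L$ having $n$ cells and $L'$ having $n+2k$ cells, and $2k+1$ uniformly spaced control inputs shift a cell by $-k,\dots,k$ cells. A level set is C-uniform if the probability distribution of the robot's state over its cells is uniform. *)

theory Defs
  imports Complex_Main
begin

definition act_prob :: "nat \<Rightarrow> nat \<Rightarrow> nat \<Rightarrow> nat \<Rightarrow> real" where
  "act_prob n k i j =
     (let m = real (n + 2 * k) in
      if j = 1 then (real n - real i + 1) / m
      else if j = 2 * k + 1 then real i / m
      else 1 / m)"

definition induced :: "nat \<Rightarrow> nat \<Rightarrow> (nat \<Rightarrow> real) \<Rightarrow> nat \<Rightarrow> real" where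
  "induced n k px l =
     (\<Sum>i\<in>{1..n}. \<Sum>j\<in>{j\<in>{1..2*k+1}. i + j - 1 = l}. act_prob n k i j * px i)"

end

theory Submission
  imports Defs
begin

lemma part1:
  assumes "k \<ge> 1" "i \<in> {1..n}"
  shows "(\<Sum>j\<in>{1..2*k+1}. act_prob n k i j) = 1"
proof -
  have s: "{1..2*k+1} = insert 1 (insert (2*k+1) {2..2*k})" using assms by auto
  have "(\<Sum>j\<in>{2..2*k}. act_prob n k i j) = (\<Sum>j\<in>{2..2*k}. 1 / real (n+2*k))"
    by (rule sum.cong) (auto simp: act_prob_def)
  also have "\<dots> = real (2*k-1) / real (n+2*k)" using assms by simp
  finally have m: "(\<Sum>j\<in>{2..2*k}. act_prob n k i j) = real (2*k-1) / real (n+2*k)" .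
  have "(\<Sum>j\<in>{1..2*k+1}. act_prob n k i j) = act_prob n k i 1 + act_prob n k i (2*k+1)
      + (\<Sum>j\<in>{2..2*k}. act_prob n k i j)" unfolding s using assms by simp
  also have "\<dots> = (real n - real i + 1) / real (n+2*k) + real i / real (n+2*k) + real (2*k-1) / real (n+2*k)"
    using assms by (simp add: m act_prob_def Let_def)
  also have "\<dots> = ((real n - real i + 1) + real i + real (2*k-1)) / real (n+2*k)"
    by (simp only: add_divide_distrib)
  also have "(real n - real i + 1) + real i + real (2*k-1) = real (n+2*k)"
    using assms by (simp add: of_nat_diff)
  also have "real (n+2*k) / real (n+2*k) = 1" using assms by simp
  finally show ?thesis .
qed

lemma part2:
  assumes n: "n \<ge> 1" and k: "k \<ge> 1" and px: "\<forall>i\<in>{1..n}. px i = 1 / real n"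
    and l: "l \<in> {1..n+2*k}"
  shows "induced n k px l = 1 / real (n + 2*k)"
proof -
  define P where "P j \<longleftrightarrow> j \<le> l \<and> l + 1 - j \<le> n" for j
  define f where "f j = (if P j then act_prob n k (l+1-j) j / real n else 0)" for j
  have "induced n k px l = (\<Sum>i\<in>{1..n}. \<Sum>j\<in>{1..2*k+1}. if i + j = l + 1 then act_prob n k i j / real n else 0)"
    unfolding induced_def
    apply (rule sum.cong, simp)
    apply (subst sum.inter_filter[symmetric], simp)
    apply (rule sum.cong) using px by auto
  also have "\<dots> = (\<Sum>j\<in>{1..2*k+1}. \<Sum>i\<in>{1..n}. if i + j = l + 1 then act_prob n k i j / real n else 0)"
    by (rule sum.swap)
  also have "\<dots> = (\<Sum>j\<in>{1..2*k+1}. f j)"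
  proof (rule sum.cong, simp)
    fix j assume j: "j \<in> {1..2*k+1}"
    have "(\<Sum>i\<in>{1..n}. if i + j = l + 1 then act_prob n k i j / real n else 0)
        = (\<Sum>i\<in>{1..n}. if i = l + 1 - j then act_prob n k (l+1-j) j / real n else 0)"
      apply (rule sum.cong, simp) using j by auto
    also have "\<dots> = f j" unfolding f_def P_def using j l by auto
    finally show "(\<Sum>i\<in>{1..n}. if i + j = l + 1 then act_prob n k i j / real n else 0) = f j" .
  qed
  also have "\<dots> = f 1 + f (2*k+1) + (\<Sum>j\<in>{2..2*k}. f j)"
  proof -
    have s: "{1..2*k+1} = insert 1 (insert (2*k+1) {2..2*k})" using k by auto
    show ?thesis unfolding s using k by simp
  qed
  also have "(\<Sum>j\<in>{2..2*k}. f j) = (\<Sum>j\<in>{j\<in>{2..2*k}. P j}. 1 / (real (n+2*k) * real n))"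
    apply (subst sum.inter_filter, simp)
    apply (rule sum.cong, simp) by (auto simp: f_def act_prob_def)
  also have "{j\<in>{2..2*k}. P j} = {max 2 (l+1-n) .. min (2*k) l}"
    unfolding P_def using n l by auto
  finally have eq: "induced n k px l = f 1 + f (2*k+1) +
      real (min (2*k) l + 1 - max 2 (l+1-n)) / (real (n+2*k) * real n)" by simp
  have f1: "f 1 = (if l \<le> n then (real n - real l + 1) / (real (n+2*k) * real n) else 0)"
    unfolding f_def P_def act_prob_def using l by (auto simp: Let_def)
  have f2: "f (2*k+1) = (if 2*k+1 \<le> l then (real l - 2*real k) / (real (n+2*k) * real n) else 0)"
    unfolding f_def P_def act_prob_def using l k by (auto simp: Let_def of_nat_diff)
  have npos: "real n > 0" using n by simp
  have mpos: "real (n+2*k) > 0" using n by simp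
  have key: "(if l \<le> n then (real n - real l + 1) else 0) + (if 2*k+1 \<le> l then (real l - 2*real k) else 0)
     + real (min (2*k) l + 1 - max 2 (l+1-n)) = real n"
    using l n k by (auto simp: of_nat_diff min_def max_def split: if_splits)
  have "induced n k px l = ((if l \<le> n then (real n - real l + 1) else 0) + (if 2*k+1 \<le> l then (real l - 2*real k) else 0)
     + real (min (2*k) l + 1 - max 2 (l+1-n))) / (real (n+2*k) * real n)"
    unfolding eq f1 f2 by (simp add: add_divide_distrib)
  also have "\<dots> = 1 / real (n+2*k)" unfolding key using npos mpos by simp
  finally show ?thesis .
qed

theorem mainTheorem1:
  fixes n k :: nat and px :: "nat \<Rightarrow> real"
  assumes "n \<ge> 1" and "k \<ge> 1"
  shows "(\<forall>i\<in>{1..n}. (\<Sum>j\<in>{1..2*k+1}. act_prob n k i j) = 1)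
       \<and> ((\<forall>i\<in>{1..n}. px i = 1 / real n) \<longrightarrow>
            (\<forall>l\<in>{1..n+2*k}. induced n k px l = 1 / real (n + 2*k)))"
  using part1 part2 assms by blast

end
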